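(* $\mathfrak{L}(\mathrm{rtNBVA}(2))\not\subseteq\bigcup_k\mathfrak{L}(\mathrm{rtDBVA}(k))$.
   Context: $\mathfrak{L}(A)$ denotes the class of languages recognized by machines of type $A$; the union ranges over $k\ge1$. A real-time deterministic blind vector automaton of dimension $k$ ($\mathrm{rtDBVA}(k)$) is a 6-tuple $(Q,\Sigma,\delta,q_0,Q_a,v)$ with finite state set $Q$, initial state $q_0$, accept states $Q_a$, initial row vector $v\in\mathbb{Q}^k$ (freely chosen), and $\delta:Q\times(\Sigma\cup\{\cent,\$\})\to Q\times S$, $S$ the set of $k\times k$ rational matrices; the input $w$ is read as $\cent w\$$ left to right, one symbol per step, and $\delta(q,\sigma)=(q',M)$ means that in state $q$ reading $\sigma$ the machine goes to $q'$ and multiplies its row vector on the right by $M$. The input is accepted iff after processing $\$$ the state is in $Q_a$ and the first vector entry equals $1$. A real-time nondeterministic blind vector automaton of dimension $k$ ($\mathrm{rtNBVA}(k)$) is defined the same way except that $\delta:Q\times(\Sigma\cup\{\cent,\$\})\to\mathcal{P}(Q\times S)$ (power set), each step choosing one pair from $\delta(q,\sigma)$; an input is accepted iff some computation path ends, after processing $\$$, in a state of $Q_a$ with first vector entry equal to $1$. *)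

theory Defs
  imports Complex_Main
begin

datatype 'a sym = Cent | Dollar | Sym 'a

text \<open>k x k rational matrices and row vectors, represented by functions; only
  indices below k are meaningful.\<close>
type_synonym matr = "nat \<Rightarrow> nat \<Rightarrow> rat"
type_synonym vect = "nat \<Rightarrow> rat"

definition vmul :: "nat \<Rightarrow> vect \<Rightarrow> matr \<Rightarrow> vect" where
  "vmul k v M = (\<lambda>j. \<Sum>i<k. v i * M i j)"

definition tape :: "'a list \<Rightarrow> 'a sym list" where
  "tape w = Cent # map Sym w @ [Dollar]"

definition tape_syms :: "'a set \<Rightarrow> 'a sym set" where
  "tape_syms \<Sigma> = insert Cent (insert Dollar (Sym ` \<Sigma>))"

fun drun :: "nat \<Rightarrow> (nat \<Rightarrow> 'a sym \<Rightarrow> nat \<times> matr) \<Rightarrow> nat \<times> vect \<Rightarrow> 'a sym list \<Rightarrow> nat \<times> vect" where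
  "drun k \<delta> c [] = c"
| "drun k \<delta> (q, v) (\<sigma> # xs) = drun k \<delta> (fst (\<delta> q \<sigma>), vmul k v (snd (\<delta> q \<sigma>))) xs"

definition is_dbva :: "'a set \<Rightarrow> nat \<Rightarrow> nat set \<Rightarrow> (nat \<Rightarrow> 'a sym \<Rightarrow> nat \<times> matr) \<Rightarrow> nat \<Rightarrow> nat set \<Rightarrow> bool" where
  "is_dbva \<Sigma> k Q \<delta> q0 Qa \<longleftrightarrow> 1 \<le> k \<and> finite Q \<and> q0 \<in> Q \<and> Qa \<subseteq> Q \<and>
     (\<forall>q\<in>Q. \<forall>\<sigma>\<in>tape_syms \<Sigma>. fst (\<delta> q \<sigma>) \<in> Q)"

definition dbva_accepts :: "nat \<Rightarrow> (nat \<Rightarrow> 'a sym \<Rightarrow> nat \<times> matr) \<Rightarrow> nat \<Rightarrow> nat set \<Rightarrow> vect \<Rightarrow> 'a list \<Rightarrow> bool" where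
  "dbva_accepts k \<delta> q0 Qa v w \<longleftrightarrow>
     (let c = drun k \<delta> (q0, v) (tape w) in fst c \<in> Qa \<and> snd c 0 = 1)"

definition dbva_lang :: "'a set \<Rightarrow> nat \<Rightarrow> 'a list set \<Rightarrow> bool" where
  "dbva_lang \<Sigma> k L \<longleftrightarrow> (\<exists>Q \<delta> q0 Qa v. is_dbva \<Sigma> k Q \<delta> q0 Qa \<and>
     L = {w \<in> lists \<Sigma>. dbva_accepts k \<delta> q0 Qa v w})"

inductive nrun :: "nat \<Rightarrow> (nat \<Rightarrow> 'a sym \<Rightarrow> (nat \<times> matr) set) \<Rightarrow> nat \<times> vect \<Rightarrow> 'a sym list \<Rightarrow> nat \<times> vect \<Rightarrow> bool"
  for k \<delta> where
  nrun_Nil: "nrun k \<delta> c [] c"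
| nrun_Cons: "(q', M) \<in> \<delta> q \<sigma> \<Longrightarrow> nrun k \<delta> (q', vmul k v M) xs c \<Longrightarrow> nrun k \<delta> (q, v) (\<sigma> # xs) c"

definition is_nbva :: "'a set \<Rightarrow> nat \<Rightarrow> nat set \<Rightarrow> (nat \<Rightarrow> 'a sym \<Rightarrow> (nat \<times> matr) set) \<Rightarrow> nat \<Rightarrow> nat set \<Rightarrow> bool" where
  "is_nbva \<Sigma> k Q \<delta> q0 Qa \<longleftrightarrow> 1 \<le> k \<and> finite Q \<and> q0 \<in> Q \<and> Qa \<subseteq> Q \<and>
     (\<forall>q\<in>Q. \<forall>\<sigma>\<in>tape_syms \<Sigma>. finite (\<delta> q \<sigma>) \<and> fst ` \<delta> q \<sigma> \<subseteq> Q)"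

definition nbva_accepts :: "nat \<Rightarrow> (nat \<Rightarrow> 'a sym \<Rightarrow> (nat \<times> matr) set) \<Rightarrow> nat \<Rightarrow> nat set \<Rightarrow> vect \<Rightarrow> 'a list \<Rightarrow> bool" where
  "nbva_accepts k \<delta> q0 Qa v w \<longleftrightarrow>
     (\<exists>q u. nrun k \<delta> (q0, v) (tape w) (q, u) \<and> q \<in> Qa \<and> u 0 = 1)"

definition nbva_lang :: "'a set \<Rightarrow> nat \<Rightarrow> 'a list set \<Rightarrow> bool" where
  "nbva_lang \<Sigma> k L \<longleftrightarrow> (\<exists>Q \<delta> q0 Qa v. is_nbva \<Sigma> k Q \<delta> q0 Qa \<and>
     L = {w \<in> lists \<Sigma>. nbva_accepts k \<delta> q0 Qa v w})"

end

theory Submission imports Defs begin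

lemma elim_lemma:
  "finite T \<Longrightarrow> n < card T \<Longrightarrow>
   \<exists>c. (\<exists>t\<in>T. c t \<noteq> 0) \<and> (\<forall>i<n. (\<Sum>t\<in>T. c t * f t i) = (0::rat))"
proof (induction n arbitrary: T f)
  case 0
  then have "T \<noteq> {}" by auto
  then show ?case by (rule_tac x="\<lambda>_. 1" in exI) auto
next
  case (Suc n)
  show ?case
  proof (cases "\<forall>t\<in>T. f t n = 0")
    case True
    from Suc.IH[of T f] Suc.prems obtain c where c: "\<exists>t\<in>T. c t \<noteq> 0"
      "\<forall>i<n. (\<Sum>t\<in>T. c t * f t i) = 0" by auto
    show ?thesis
    proof (intro exI conjI allI impI)
      show "\<exists>t\<in>T. c t \<noteq> 0" by fact
      fix i assume "i < Suc n"
      then consider "i < n" | "i = n" by linarith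
      then show "(\<Sum>t\<in>T. c t * f t i) = 0"
        by cases (use c True in auto)
    qed
  next
    case False
    then obtain t0 where t0: "t0 \<in> T" "f t0 n \<noteq> 0" by auto
    define T' where "T' = T - {t0}"
    define g where "g t i = f t i - f t n / f t0 n * f t0 i" for t i
    have fin': "finite T'" using Suc.prems by (simp add: T'_def)
    have card': "n < card T'" using Suc.prems t0 by (simp add: T'_def)
    from Suc.IH[OF fin' card', of g] obtain d where d: "\<exists>t\<in>T'. d t \<noteq> 0"
      "\<forall>i<n. (\<Sum>t\<in>T'. d t * g t i) = 0" by auto
    define S where "S = (\<Sum>t\<in>T'. d t * f t n)"
    define c where "c = d(t0 := - S / f t0 n)"
    have t0T': "t0 \<notin> T'" by (simp add: T'_def)
    have split: "(\<Sum>t\<in>T. c t * f t i) = c t0 * f t0 i + (\<Sum>t\<in>T'. d t * f t i)" for i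
    proof -
      have "(\<Sum>t\<in>T. c t * f t i) = c t0 * f t0 i + (\<Sum>t\<in>T'. c t * f t i)"
        using Suc.prems(1) t0(1) by (simp add: T'_def sum.remove)
      also have "(\<Sum>t\<in>T'. c t * f t i) = (\<Sum>t\<in>T'. d t * f t i)"
        by (rule sum.cong) (use t0T' in \<open>auto simp: c_def\<close>)
      finally show ?thesis .
    qed
    show ?thesis
    proof (intro exI conjI allI impI)
      show "\<exists>t\<in>T. c t \<noteq> 0" using d(1) t0T' by (auto simp: c_def T'_def)
      fix i assume "i < Suc n"
      then consider "i < n" | "i = n" by linarith
      then show "(\<Sum>t\<in>T. c t * f t i) = 0"
      proof cases
        case 1
        have "0 = (\<Sum>t\<in>T'. d t * g t i)" using d(2) 1 by simp
        also have "\<dots> = (\<Sum>t\<in>T'. d t * f t i) - S / f t0 n * f t0 i"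
          by (simp add: g_def S_def right_diff_distrib sum_subtractf sum_distrib_right
              sum_divide_distrib mult.assoc)
        finally show ?thesis using split[of i] t0(2) by (simp add: c_def)
      next
        case 2
        show ?thesis using split[of i] t0(2) 2 by (simp add: c_def S_def)
      qed
    qed
  qed
qed

lemma drun_append: "drun k \<delta> c (xs @ ys) = drun k \<delta> (drun k \<delta> c xs) ys"
  by (induction xs arbitrary: c) (auto split: prod.splits)

lemma drun_fst: "fst (drun k \<delta> (q, v) xs) = fst (drun k \<delta> (q, v') xs)"
  by (induction xs arbitrary: q v v') auto

definition ev :: "nat \<Rightarrow> vect" where "ev i = (\<lambda>l. if l = i then 1 else 0)"

lemma vmul_ev: "vmul k (ev i) M l = M i l" if "i < k"
proof -
  have "vmul k (ev i) M l = (\<Sum>ia<k. if ia = i then M ia l else 0)"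
    unfolding vmul_def ev_def by (rule sum.cong) auto
  then show ?thesis using that by simp
qed

lemma drun_lin: "j < k \<Longrightarrow>
  snd (drun k \<delta> (q, v) xs) j = (\<Sum>i<k. v i * snd (drun k \<delta> (q, ev i) xs) j)"
proof (induction xs arbitrary: q v)
  case Nil
  then show ?case by (simp add: ev_def if_distrib cong: if_cong)
next
  case (Cons \<sigma> xs)
  define q' where "q' = fst (\<delta> q \<sigma>)"
  define M where "M = snd (\<delta> q \<sigma>)"
  define D where "D l = snd (drun k \<delta> (q', ev l) xs) j" for l
  have step: "snd (drun k \<delta> (q, u) (\<sigma> # xs)) j = (\<Sum>l<k. vmul k u M l * D l)" for u
  proof -
    have "snd (drun k \<delta> (q, u) (\<sigma> # xs)) j = snd (drun k \<delta> (q', vmul k u M) xs) j"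
      by (simp add: q'_def M_def)
    also have "\<dots> = (\<Sum>l<k. vmul k u M l * D l)"
      unfolding D_def by (rule Cons.IH[OF Cons.prems])
    finally show ?thesis .
  qed
  have "snd (drun k \<delta> (q, v) (\<sigma> # xs)) j = (\<Sum>l<k. vmul k v M l * D l)"
    by (rule step)
  also have "\<dots> = (\<Sum>l<k. \<Sum>i<k. v i * M i l * D l)"
    by (simp add: vmul_def sum_distrib_right)
  also have "\<dots> = (\<Sum>i<k. \<Sum>l<k. v i * M i l * D l)"
    by (rule sum.swap)
  also have "\<dots> = (\<Sum>i<k. v i * snd (drun k \<delta> (q, ev i) (\<sigma> # xs)) j)"
  proof (rule sum.cong)
    fix i assume i: "i \<in> {..<k}"
    have "snd (drun k \<delta> (q, ev i) (\<sigma> # xs)) j = (\<Sum>l<k. vmul k (ev i) M l * D l)"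
      by (rule step)
    also have "\<dots> = (\<Sum>l<k. M i l * D l)" using i by (simp add: vmul_ev)
    finally show "(\<Sum>l<k. v i * M i l * D l) = v i * snd (drun k \<delta> (q, ev i) (\<sigma> # xs)) j"
      by (simp add: sum_distrib_left mult.assoc)
  qed simp
  finally show ?case .
qed

lemma drun_closed: "is_dbva \<Sigma> k Q \<delta> q0 Qa \<Longrightarrow> q \<in> Q \<Longrightarrow> set xs \<subseteq> tape_syms \<Sigma> \<Longrightarrow>
  fst (drun k \<delta> (q, v) xs) \<in> Q"
  by (induction xs arbitrary: q v) (auto simp: is_dbva_def)

definition cnt :: "nat \<Rightarrow> nat list \<Rightarrow> nat" where "cnt a w = length (filter (\<lambda>x. x = a) w)"

definition LL :: "nat list set" where "LL = {w \<in> lists {0,1}. cnt 0 w \<noteq> cnt 1 w}"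

lemma cnt_rep: "cnt 0 (replicate t 0 @ replicate j 1) = t" "cnt 1 (replicate t 0 @ replicate j 1) = j"
  by (simp_all add: cnt_def)

lemma not_dbva: "\<not> dbva_lang {0,1} k LL"
proof
  assume "dbva_lang {0,1} k LL"
  then obtain Q \<delta> q0 Qa v where A: "is_dbva {0::nat,1} k Q \<delta> q0 Qa"
    and L: "LL = {w \<in> lists {0,1}. dbva_accepts k \<delta> q0 Qa v w}"
    unfolding dbva_lang_def by blast
  have k1: "1 \<le> k" and q0: "q0 \<in> Q" and fQ: "finite Q" using A by (auto simp: is_dbva_def)
  define pre where "pre t = drun k \<delta> (q0, v) (Cent # map Sym (replicate t (0::nat)))" for t
  define suf where "suf j = map Sym (replicate j (1::nat)) @ [Dollar]" for j
  define st where "st t = fst (pre t)" for t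
  define vt where "vt t = snd (pre t)" for t
  have tape: "tape (replicate t 0 @ replicate j 1) = (Cent # map Sym (replicate t 0)) @ suf j" for t j
    by (simp add: tape_def suf_def)
  have run: "drun k \<delta> (q0, v) (tape (replicate t 0 @ replicate j 1)) = drun k \<delta> (st t, vt t) (suf j)" for t j
    unfolding tape drun_append by (simp add: st_def vt_def pre_def)
  have stQ: "st t \<in> Q" for t
    unfolding st_def pre_def by (rule drun_closed[OF A q0]) (auto simp: tape_syms_def)
  have acc: "(t \<noteq> j) = (fst (drun k \<delta> (st t, vt t) (suf j)) \<in> Qa \<and> snd (drun k \<delta> (st t, vt t) (suf j)) 0 = 1)" for t j
  proof -
    have "(replicate t 0 @ replicate j 1 \<in> LL) = dbva_accepts k \<delta> q0 Qa v (replicate t 0 @ replicate j 1)"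
      by (subst L) auto
    moreover have "(replicate t 0 @ replicate j 1 \<in> LL) = (t \<noteq> j)"
      by (auto simp: LL_def cnt_def)
    ultimately show ?thesis unfolding dbva_accepts_def Let_def run by simp
  qed
  have "finite (st ` UNIV)" using stQ fQ by (meson finite_subset image_subset_iff)
  then obtain s where "infinite (st -` {s})" using inf_img_fin_dom[of st UNIV] by auto
  then obtain T where T: "finite T" "card T = k + 2" "T \<subseteq> st -` {s}"
    using infinite_arbitrarily_large by blast
  define f where "f t i = (if i < k then vt t i else 1)" for t i
  from elim_lemma[OF T(1), of "k+1" f] T(2) obtain c ts where
    ts: "ts \<in> T" "c ts \<noteq> 0" and c: "\<forall>i<k+1. (\<Sum>t\<in>T. c t * f t i) = 0" by auto
  have "\<exists>t'. t' \<in> T \<and> t' \<noteq> ts"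
  proof (rule ccontr)
    assume "\<nexists>t'. t' \<in> T \<and> t' \<noteq> ts"
    then have "T \<subseteq> {ts}" by auto
    then have "card T \<le> 1" using card_mono[of "{ts}" T] by auto
    then show False using T(2) by simp
  qed
  then obtain t' where t': "t' \<in> T" "t' \<noteq> ts" by auto
  have stT: "st t = s" if "t \<in> T" for t using T(3) that by auto
  define F where "F = fst (drun k \<delta> (s, vt ts) (suf ts))"
  have Fst: "fst (drun k \<delta> (st t, vt t) (suf ts)) = F" if "t \<in> T" for t
    unfolding F_def stT[OF that] by (rule drun_fst)
  have FQa: "F \<in> Qa" using acc[of t' ts] t' Fst[OF t'(1)] by simp
  define C where "C i = snd (drun k \<delta> (s, ev i) (suf ts)) 0" for i
  define val where "val t = (\<Sum>i<k. vt t i * C i)" for t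
  have valeq: "snd (drun k \<delta> (st t, vt t) (suf ts)) 0 = val t" if "t \<in> T" for t
    using stT[OF that] k1 by (simp add: drun_lin val_def C_def)
  have val1: "val t = 1" if "t \<in> T" "t \<noteq> ts" for t
    using acc[of t ts] that valeq[OF that(1)] by simp
  have valts: "val ts \<noteq> 1"
    using acc[of ts ts] ts valeq[OF ts(1)] Fst[OF ts(1)] FQa by simp
  have e1: "(\<Sum>t\<in>T. c t * (val t - 1)) = (\<Sum>t\<in>T. \<Sum>i<k. c t * vt t i * C i) - (\<Sum>t\<in>T. c t)"
    by (simp add: val_def right_diff_distrib sum_subtractf sum_distrib_left mult.assoc)
  have e2: "(\<Sum>i<k. C i * (\<Sum>t\<in>T. c t * f t i)) = (\<Sum>i<k. \<Sum>t\<in>T. c t * vt t i * C i)"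
    by (rule sum.cong) (auto simp: f_def sum_distrib_left mult.commute mult.left_commute)
  have "(\<Sum>t\<in>T. c t * (val t - 1)) = (\<Sum>i<k. C i * (\<Sum>t\<in>T. c t * f t i)) - (\<Sum>t\<in>T. c t * f t k)"
  proof -
    have sw: "(\<Sum>t\<in>T. \<Sum>i<k. c t * vt t i * C i) = (\<Sum>i<k. \<Sum>t\<in>T. c t * vt t i * C i)"
      by (rule sum.swap)
    show ?thesis unfolding e1 e2 sw by (simp add: f_def)
  qed
  also have "\<dots> = 0" using c by simp
  finally have z: "(\<Sum>t\<in>T. c t * (val t - 1)) = 0" .
  have "(\<Sum>t\<in>T. c t * (val t - 1)) = c ts * (val ts - 1) + (\<Sum>t\<in>T - {ts}. c t * (val t - 1))"
    using T(1) ts(1) by (simp add: sum.remove)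
  also have "(\<Sum>t\<in>T - {ts}. c t * (val t - 1)) = 0"
    by (rule sum.neutral) (auto simp: val1)
  finally have "c ts * (val ts - 1) = 0" using z by simp
  then show False using ts(2) valts by simp
qed

definition mt :: "rat \<Rightarrow> matr" where
  "mt a = (\<lambda>i j. if i = j then 1 else if i = 1 \<and> j = 0 then a else 0)"

definition dl :: "nat \<Rightarrow> nat sym \<Rightarrow> (nat \<times> matr) set" where
  "dl q \<sigma> = (case \<sigma> of
      Cent \<Rightarrow> if q = 0 then {(1, mt 0)} else {}
    | Dollar \<Rightarrow> if q = 2 \<or> q = 3 then {(4, mt 0)} else {}
    | Sym a \<Rightarrow> if a = 0 then
          (if q = 1 then {(1, mt 1), (2, mt 0)} else if q = 2 then {(2, mt 1), (2, mt 0)}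
           else if q = 3 then {(3, mt 1)} else {})
        else if a = 1 then
          (if q = 1 then {(1, mt (-1)), (3, mt 0)} else if q = 2 then {(2, mt (-1))}
           else if q = 3 then {(3, mt (-1)), (3, mt 0)} else {})
        else {})"

lemma vmul_mt0: "vmul 2 v (mt a) 0 = v 0 + v 1 * a"
  by (simp add: vmul_def mt_def numeral_2_eq_2)
lemma vmul_mt1: "vmul 2 v (mt a) 1 = v 1"
  by (simp add: vmul_def mt_def numeral_2_eq_2)

lemma nrun_Nil_iff: "nrun k \<delta> c [] c' \<longleftrightarrow> c' = c"
  by (auto intro: nrun.intros elim: nrun.cases)

lemma nrun_Cons_iff: "nrun k \<delta> (q, v) (\<sigma> # xs) c \<longleftrightarrow> (\<exists>q' M. (q', M) \<in> \<delta> q \<sigma> \<and> nrun k \<delta> (q', vmul k v M) xs c)"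
  apply (rule iffI)
   apply (erule nrun.cases; auto)
  apply (auto intro: nrun.intros)
  done

definition acc where "acc q v w \<longleftrightarrow> (\<exists>q' u. nrun 2 dl (q, v) (map Sym w @ [Dollar]) (q', u) \<and> q' \<in> {4} \<and> u 0 = 1)"

lemma acc_Nil: "acc q v [] \<longleftrightarrow> (q = 2 \<or> q = 3) \<and> v 0 = 1"
  by (auto simp: acc_def nrun_Cons_iff nrun_Nil_iff dl_def vmul_mt0)

lemma acc_Cons: "acc q v (a # w) \<longleftrightarrow> (\<exists>q' M. (q', M) \<in> dl q (Sym a) \<and> acc q' (vmul 2 v M) w)"
  by (auto simp: acc_def nrun_Cons_iff)

definition E2 where "E2 (x::rat) w \<longleftrightarrow> (\<exists>s\<le>cnt 0 w. x + of_nat (cnt 0 w) - of_nat s - of_nat (cnt 1 w) = 1)"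
definition E3 where "E3 (x::rat) w \<longleftrightarrow> (\<exists>s\<le>cnt 1 w. x + of_nat (cnt 0 w) - of_nat (cnt 1 w) + of_nat s = 1)"
definition E1 where "E1 (x::rat) w \<longleftrightarrow> (\<exists>s. 1 \<le> s \<and> s \<le> cnt 0 w \<and> x + of_nat (cnt 0 w) - of_nat s - of_nat (cnt 1 w) = 1)
   \<or> (\<exists>s. 1 \<le> s \<and> s \<le> cnt 1 w \<and> x + of_nat (cnt 0 w) - of_nat (cnt 1 w) + of_nat s = 1)"

lemma E2_0: "E2 x (0 # w) \<longleftrightarrow> E2 (x + 1) w \<or> E2 x w"
proof
  assume "E2 x (0 # w)"
  then obtain s where s: "s \<le> cnt 0 w + 1" "x + of_nat (cnt 0 w + 1) - of_nat s - of_nat (cnt 1 w) = 1"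
    by (auto simp: E2_def cnt_def)
  show "E2 (x + 1) w \<or> E2 x w"
  proof (cases s)
    case 0 then show ?thesis using s by (auto simp: E2_def) 
  next
    case (Suc s') then show ?thesis using s by (auto simp: E2_def intro!: exI[of _ s'])
  qed
next
  assume "E2 (x + 1) w \<or> E2 x w"
  then show "E2 x (0 # w)"
  proof
    assume "E2 (x+1) w"
    then obtain s where "s \<le> cnt 0 w" "x + 1 + of_nat (cnt 0 w) - of_nat s - of_nat (cnt 1 w) = 1"
      by (auto simp: E2_def)
    then show ?thesis by (auto simp: E2_def cnt_def intro!: exI[of _ s])
  next
    assume "E2 x w"
    then obtain s where "s \<le> cnt 0 w" "x + of_nat (cnt 0 w) - of_nat s - of_nat (cnt 1 w) = 1"
      by (auto simp: E2_def)
    then show ?thesis by (auto simp: E2_def cnt_def intro!: exI[of _ "Suc s"])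
  qed
qed

lemma E2_1: "E2 x (1 # w) \<longleftrightarrow> E2 (x - 1) w"
  by (auto simp: E2_def cnt_def algebra_simps)

lemma E3_0: "E3 x (0 # w) \<longleftrightarrow> E3 (x + 1) w"
  by (auto simp: E3_def cnt_def algebra_simps)

lemma E3_1: "E3 x (1 # w) \<longleftrightarrow> E3 (x - 1) w \<or> E3 x w"
proof
  assume "E3 x (1 # w)"
  then obtain s where s: "s \<le> cnt 1 w + 1" "x + of_nat (cnt 0 w) - of_nat (cnt 1 w + 1) + of_nat s = 1"
    by (auto simp: E3_def cnt_def)
  show "E3 (x - 1) w \<or> E3 x w"
  proof (cases s)
    case 0 then show ?thesis using s by (auto simp: E3_def) 
  next
    case (Suc s') then show ?thesis using s by (auto simp: E3_def intro!: exI[of _ s'])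
  qed
next
  assume "E3 (x - 1) w \<or> E3 x w"
  then show "E3 x (1 # w)"
  proof
    assume "E3 (x - 1) w"
    then obtain s where "s \<le> cnt 1 w" "x - 1 + of_nat (cnt 0 w) - of_nat (cnt 1 w) + of_nat s = 1"
      by (auto simp: E3_def)
    then show ?thesis by (auto simp: E3_def cnt_def intro!: exI[of _ s])
  next
    assume "E3 x w"
    then obtain s where "s \<le> cnt 1 w" "x + of_nat (cnt 0 w) - of_nat (cnt 1 w) + of_nat s = 1"
      by (auto simp: E3_def)
    then show ?thesis by (auto simp: E3_def cnt_def intro!: exI[of _ "Suc s"])
  qed
qed

lemma E1_0: "E1 x (0 # w) \<longleftrightarrow> E1 (x + 1) w \<or> E2 x w"
proof
  assume "E1 x (0 # w)"
  then consider s where "1 \<le> s" "s \<le> cnt 0 w + 1" "x + of_nat (cnt 0 w + 1) - of_nat s - of_nat (cnt 1 w) = 1"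
    | s where "1 \<le> s" "s \<le> cnt 1 w" "x + of_nat (cnt 0 w + 1) - of_nat (cnt 1 w) + of_nat s = 1"
    by (auto simp: E1_def cnt_def)
  then show "E1 (x + 1) w \<or> E2 x w"
  proof cases
    case (1 s)
    then obtain s' where "s = Suc s'" by (cases s) auto
    then show ?thesis using 1 by (auto simp: E2_def intro!: exI[of _ s'])
  next
    case (2 s)
    then show ?thesis by (auto simp: E1_def intro!: exI[of _ s])
  qed
next
  assume "E1 (x + 1) w \<or> E2 x w"
  then consider s where "1 \<le> s" "s \<le> cnt 0 w" "x + 1 + of_nat (cnt 0 w) - of_nat s - of_nat (cnt 1 w) = 1"
    | s where "1 \<le> s" "s \<le> cnt 1 w" "x + 1 + of_nat (cnt 0 w) - of_nat (cnt 1 w) + of_nat s = 1"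
    | s where "s \<le> cnt 0 w" "x + of_nat (cnt 0 w) - of_nat s - of_nat (cnt 1 w) = 1"
    by (auto simp: E1_def E2_def)
  then show "E1 x (0 # w)"
  proof cases
    case (1 s) then show ?thesis by (auto simp: E1_def cnt_def intro!: disjI1 exI[of _ s])
  next
    case (2 s) then show ?thesis by (auto simp: E1_def cnt_def intro!: disjI2 exI[of _ s])
  next
    case (3 s) then show ?thesis by (auto simp: E1_def cnt_def intro!: disjI1 exI[of _ "Suc s"])
  qed
qed

lemma E1_1: "E1 x (1 # w) \<longleftrightarrow> E1 (x - 1) w \<or> E3 x w"
proof
  assume "E1 x (1 # w)"
  then consider s where "1 \<le> s" "s \<le> cnt 0 w" "x + of_nat (cnt 0 w) - of_nat s - of_nat (cnt 1 w + 1) = 1"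
    | s where "1 \<le> s" "s \<le> cnt 1 w + 1" "x + of_nat (cnt 0 w) - of_nat (cnt 1 w + 1) + of_nat s = 1"
    by (auto simp: E1_def cnt_def)
  then show "E1 (x - 1) w \<or> E3 x w"
  proof cases
    case (1 s)
    then show ?thesis by (auto simp: E1_def intro!: exI[of _ s])
  next
    case (2 s)
    then obtain s' where "s = Suc s'" by (cases s) auto
    then show ?thesis using 2 by (auto simp: E3_def intro!: exI[of _ s'])
  qed
next
  assume "E1 (x - 1) w \<or> E3 x w"
  then consider s where "1 \<le> s" "s \<le> cnt 0 w" "x - 1 + of_nat (cnt 0 w) - of_nat s - of_nat (cnt 1 w) = 1"
    | s where "1 \<le> s" "s \<le> cnt 1 w" "x - 1 + of_nat (cnt 0 w) - of_nat (cnt 1 w) + of_nat s = 1"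
    | s where "s \<le> cnt 1 w" "x + of_nat (cnt 0 w) - of_nat (cnt 1 w) + of_nat s = 1"
    by (auto simp: E1_def E3_def)
  then show "E1 x (1 # w)"
  proof cases
    case (1 s) then show ?thesis by (auto simp: E1_def cnt_def intro!: disjI1 exI[of _ s])
  next
    case (2 s) then show ?thesis by (auto simp: E1_def cnt_def intro!: disjI2 exI[of _ s])
  next
    case (3 s) then show ?thesis by (auto simp: E1_def cnt_def intro!: disjI2 exI[of _ "Suc s"])
  qed
qed

lemma acc_char: "w \<in> lists {0,1} \<Longrightarrow> v 1 = 1 \<Longrightarrow>
  (acc 2 v w \<longleftrightarrow> E2 (v 0) w) \<and> (acc 3 v w \<longleftrightarrow> E3 (v 0) w) \<and> (acc 1 v w \<longleftrightarrow> E1 (v 0) w)"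
proof (induction w arbitrary: v)
  case Nil
  then show ?case by (simp add: acc_Nil E1_def E2_def E3_def cnt_def)
next
  case (Cons a w)
  have IH: "\<And>b. (acc 2 (vmul 2 v (mt b)) w \<longleftrightarrow> E2 (v 0 + b) w) \<and> (acc 3 (vmul 2 v (mt b)) w \<longleftrightarrow> E3 (v 0 + b) w) \<and> (acc 1 (vmul 2 v (mt b)) w \<longleftrightarrow> E1 (v 0 + b) w)"
  proof -
    fix b
    have h1: "vmul 2 v (mt b) 1 = 1" using Cons.prems(2) by (simp only: vmul_mt1)
    have h2: "w \<in> lists {0,1}" using Cons.prems(1) by simp
    have h3: "vmul 2 v (mt b) 0 = v 0 + b" using Cons.prems(2) by (simp add: vmul_mt0)
    show "?thesis b" using Cons.IH[of "vmul 2 v (mt b)", OF h2 h1] unfolding h3 .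
  qed
  from Cons.prems have "a = 0 \<or> a = 1" by auto
  then show ?case
  proof
    assume a: "a = 0"
    have c2: "acc 2 v (a # w) \<longleftrightarrow> acc 2 (vmul 2 v (mt 1)) w \<or> acc 2 (vmul 2 v (mt 0)) w"
      by (auto simp add: a acc_Cons dl_def)
    have c3: "acc 3 v (a # w) \<longleftrightarrow> acc 3 (vmul 2 v (mt 1)) w"
      by (auto simp add: a acc_Cons dl_def)
    have c1: "acc 1 v (a # w) \<longleftrightarrow> acc 1 (vmul 2 v (mt 1)) w \<or> acc 2 (vmul 2 v (mt 0)) w"
      by (auto simp add: a acc_Cons dl_def)
    show ?thesis unfolding c1 c2 c3 unfolding a E2_0 E3_0 E1_0 using IH[of 0] IH[of 1] by simp
  next
    assume a: "a = 1"
    have x1: "v 0 + - 1 = v 0 - 1" by simp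
    have c2: "acc 2 v (a # w) \<longleftrightarrow> acc 2 (vmul 2 v (mt (-1))) w"
      by (auto simp add: a acc_Cons dl_def)
    have c3: "acc 3 v (a # w) \<longleftrightarrow> acc 3 (vmul 2 v (mt (-1))) w \<or> acc 3 (vmul 2 v (mt 0)) w"
      by (auto simp add: a acc_Cons dl_def)
    have c1: "acc 1 v (a # w) \<longleftrightarrow> acc 1 (vmul 2 v (mt (-1))) w \<or> acc 3 (vmul 2 v (mt 0)) w"
      by (auto simp add: a acc_Cons dl_def)
    show ?thesis unfolding c1 c2 c3 unfolding a E2_1 E3_1 E1_1 using IH[of 0] IH[of "-1"] unfolding x1 by simp
  qed
qed

lemma E1_one: "E1 1 w \<longleftrightarrow> cnt 0 w \<noteq> cnt 1 w"
proof
  assume "E1 1 w" then show "cnt 0 w \<noteq> cnt 1 w" by (auto simp: E1_def)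
next
  assume ne: "cnt 0 w \<noteq> cnt 1 w"
  show "E1 1 w"
  proof (cases "cnt 0 w > cnt 1 w")
    case True
    then show ?thesis unfolding E1_def
      by (intro disjI1 exI[of _ "cnt 0 w - cnt 1 w"]) (auto simp: of_nat_diff)
  next
    case False
    then show ?thesis using ne unfolding E1_def
      by (intro disjI2 exI[of _ "cnt 1 w - cnt 0 w"]) (auto simp: of_nat_diff)
  qed
qed

lemma is_nbva_dl: "is_nbva {0,1} 2 {0..4} dl 0 {4}"
  by (auto simp: is_nbva_def tape_syms_def dl_def)

lemma nbva_LL: "nbva_lang {0,1} 2 LL"
  unfolding nbva_lang_def
proof (intro exI conjI)
  show "is_nbva {0,1} 2 {0..4} dl 0 {4}" by (rule is_nbva_dl)
  show "LL = {w \<in> lists {0, 1}. nbva_accepts 2 dl 0 {4} (\<lambda>_. 1) w}"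
  proof (rule set_eqI)
    fix w :: "nat list"
    have "nbva_accepts 2 dl 0 {4} (\<lambda>_. 1) w \<longleftrightarrow> acc 1 (vmul 2 (\<lambda>_. 1) (mt 0)) w"
      by (simp add: nbva_accepts_def acc_def tape_def nrun_Cons_iff dl_def)
    moreover have "w \<in> lists {0,1} \<Longrightarrow> acc 1 (vmul 2 (\<lambda>_. 1) (mt 0)) w \<longleftrightarrow> E1 1 w"
    proof -
      assume w: "w \<in> lists {0,1}"
      have h1: "vmul 2 (\<lambda>_. 1) (mt 0) 1 = 1" by (simp only: vmul_mt1)
      have h0: "vmul 2 (\<lambda>_. 1) (mt 0) 0 = 1" by (simp add: vmul_mt0)
      show ?thesis using acc_char[of w "vmul 2 (\<lambda>_. 1) (mt 0)", OF w h1] unfolding h0 by blast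
    qed
    ultimately show "w \<in> LL \<longleftrightarrow> w \<in> {w \<in> lists {0, 1}. nbva_accepts 2 dl 0 {4} (\<lambda>_. 1) w}"
      by (auto simp: LL_def E1_one)
  qed
qed

theorem theorem14:
  shows "\<exists>(\<Sigma> :: nat set) L. finite \<Sigma> \<and> L \<subseteq> lists \<Sigma> \<and> nbva_lang \<Sigma> 2 L \<and>
           \<not> (\<exists>k. dbva_lang \<Sigma> k L)"
  using nbva_LL not_dbva by (intro exI[of _ "{0,1}"] exI[of _ LL]) (auto simp: LL_def)

end
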